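(* Let $\omega$ be a weight function whose associated weight matrix $\{W^x\}_{x>0}$ satisfies $$\forall x>0\ \exists y>0\ \exists A>0\ \forall k\ge1:\ \vartheta^x_k\le A\,(W^y_k)^{1/k}.$$ Then $\omega$ is good if and only if $\omega$ is equivalent to its least concave majorant.
   Context: A weight function is a continuous increasing $\omega:[0,\infty)\to[0,\infty)$ with $\omega(0)=0$, $\omega(t)\to\infty$, $\omega(2t)=O(\omega(t))$, $\omega(t)=O(t)$, $\log t=o(\omega(t))$, and $\varphi(t)=\omega(e^t)$ convex; normalized with $\omega|_{[0,1]}=0$, $\varphi^*(t)=\sup_{s\ge0}(st-\varphi(s))$, weight matrix $W^x_k=\exp(\frac1x\varphi^*(xk))$, $\vartheta^x_k=W^x_k/W^x_{k-1}$. $\omega$ is good if $\forall x>0\ \exists y>0\ \exists C\ge1\ \forall 1\le j\le k:\ \vartheta^x_j/j\le C\vartheta^y_k/k$. Two functions $\omega,\sigma$ are equivalent if $\omega=O(\sigma)$ and $\sigma=O(\omega)$ as $t\to\infty$. *)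

theory Defs
  imports "HOL-Analysis.Analysis" "HOL-Library.Landau_Symbols"
begin

definition weight_function :: "(real \<Rightarrow> real) \<Rightarrow> bool" where
  "weight_function \<omega> \<longleftrightarrow>
     continuous_on {0..} \<omega> \<and>
     mono_on {0..} \<omega> \<and>
     (\<forall>t\<ge>0. \<omega> t \<ge> 0) \<and>
     \<omega> 0 = 0 \<and>
     filterlim \<omega> at_top at_top \<and>
     (\<lambda>t. \<omega> (2 * t)) \<in> O[at_top](\<omega>) \<and>
     \<omega> \<in> O[at_top](\<lambda>t. t) \<and>
     (\<lambda>t. ln t) \<in> o[at_top](\<omega>) \<and>
     convex_on UNIV (\<lambda>t. \<omega> (exp t))"

definition normalized_weight :: "(real \<Rightarrow> real) \<Rightarrow> bool" where
  "normalized_weight \<omega> \<longleftrightarrow> (\<forall>t\<in>{0..1}. \<omega> t = 0)"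

definition wphi :: "(real \<Rightarrow> real) \<Rightarrow> real \<Rightarrow> real" where
  "wphi \<omega> t = \<omega> (exp t)"

definition wphi_star :: "(real \<Rightarrow> real) \<Rightarrow> real \<Rightarrow> real" where
  "wphi_star \<omega> t = (SUP s\<in>{0..}. s * t - wphi \<omega> s)"

definition W :: "(real \<Rightarrow> real) \<Rightarrow> real \<Rightarrow> nat \<Rightarrow> real" where
  "W \<omega> x k = exp (wphi_star \<omega> (x * real k) / x)"

text \<open>Quotients vartheta^x_k = W^x_k / W^x_(k-1) (used for k >= 1).\<close>
definition vartheta :: "(real \<Rightarrow> real) \<Rightarrow> real \<Rightarrow> nat \<Rightarrow> real" where
  "vartheta \<omega> x k = W \<omega> x k / W \<omega> x (k - 1)"

definition good_weight :: "(real \<Rightarrow> real) \<Rightarrow> bool" where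
  "good_weight \<omega> \<longleftrightarrow>
     (\<forall>x>0. \<exists>y>0. \<exists>C\<ge>1. \<forall>j k. 1 \<le> j \<and> j \<le> k \<longrightarrow>
        vartheta \<omega> x j / real j \<le> C * vartheta \<omega> y k / real k)"

definition least_concave_majorant :: "(real \<Rightarrow> real) \<Rightarrow> real \<Rightarrow> real" where
  "least_concave_majorant \<omega> t =
     Inf {g t | g. concave_on {0..} g \<and> (\<forall>s\<ge>0. \<omega> s \<le> g s)}"

definition equivalent_weights :: "(real \<Rightarrow> real) \<Rightarrow> (real \<Rightarrow> real) \<Rightarrow> bool" where
  "equivalent_weights \<omega> \<sigma> \<longleftrightarrow> \<omega> \<in> O[at_top](\<sigma>) \<and> \<sigma> \<in> O[at_top](\<omega>)"

end

theory Submission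
  imports Defs
begin


locale wf =
  fixes \<omega> :: "real \<Rightarrow> real"
  assumes wf: "weight_function \<omega>" and nw: "normalized_weight \<omega>"
begin

abbreviation "ph \<equiv> wphi \<omega>"
abbreviation "ps \<equiv> wphi_star \<omega>"

lemma om_nonneg: "t \<ge> 0 \<Longrightarrow> \<omega> t \<ge> 0"
  using wf unfolding weight_function_def by auto

lemma om_mono: "0 \<le> s \<Longrightarrow> s \<le> t \<Longrightarrow> \<omega> s \<le> \<omega> t"
proof -
  assume a: "0 \<le> s" "s \<le> t"
  have "mono_on {0..} \<omega>" using wf unfolding weight_function_def by blast
  then show ?thesis by (rule mono_onD) (use a in auto)
qed

lemma ph_nonneg: "ph s \<ge> 0"
  unfolding wphi_def by (rule om_nonneg) simp

lemma ph_mono: "s \<le> s' \<Longrightarrow> ph s \<le> ph s'"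
  unfolding wphi_def by (rule om_mono) auto

lemma ph_zero: "s \<le> 0 \<Longrightarrow> ph s = 0"
  using nw unfolding wphi_def normalized_weight_def by auto

lemma ph_convex: "convex_on UNIV ph"
  using wf unfolding weight_function_def wphi_def by auto

lemma ph_superlin: "\<exists>S\<ge>0. \<forall>s\<ge>S. A * s \<le> ph s"
proof (cases "A \<le> 0")
  case True
  then show ?thesis by (intro exI[of _ 0]) (auto intro: order_trans[OF _ ph_nonneg] simp: mult_nonpos_nonneg)
next
  case False
  have "(\<lambda>t. ln t) \<in> o[at_top](\<omega>)" using wf unfolding weight_function_def by auto
  from landau_o.smallD[OF this, of "1/A"] False
  have "\<forall>\<^sub>F t in at_top. norm (ln t) \<le> 1/A * norm (\<omega> t)" by auto
  then obtain N where N: "\<And>t. t \<ge> N \<Longrightarrow> norm (ln t) \<le> 1/A * norm (\<omega> t)"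
    by (auto simp: eventually_at_top_linorder)
  show ?thesis
  proof (intro exI[of _ "max 0 (ln (max N 1))"] conjI allI impI)
    fix s assume s: "max 0 (ln (max N 1)) \<le> s"
    have "max N 1 = exp (ln (max N 1))" by simp
    also have "\<dots> \<le> exp s" using s by (simp only: exp_le_cancel_iff max.bounded_iff)
    finally have "exp s \<ge> max N 1" .
    then have "norm (ln (exp s)) \<le> 1/A * norm (\<omega> (exp s))" by (intro N) simp
    moreover have "\<omega> (exp s) \<ge> 0" by (rule om_nonneg) simp
    ultimately have "\<bar>s\<bar> \<le> \<omega> (exp s) / A" by simp
    then have "s \<le> \<omega> (exp s) / A" by linarith
    then show "A * s \<le> ph s" using False unfolding wphi_def by (simp add: field_simps)
  qed simp
qed

lemma ps_def': "ps t = Sup ((\<lambda>s. s * t - ph s) ` {0..})"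
  unfolding wphi_star_def by simp

lemma ps_bdd: "bdd_above ((\<lambda>s. s * t - ph s) ` {0..})"
proof -
  obtain S where S: "S \<ge> 0" "\<And>s. s \<ge> S \<Longrightarrow> \<bar>t\<bar> * s \<le> ph s"
    using ph_superlin[of "\<bar>t\<bar>"] by auto
  have "s * t - ph s \<le> S * \<bar>t\<bar>" if "s \<ge> 0" for s
  proof (cases "s \<ge> S")
    case True
    have "s * t \<le> \<bar>t\<bar> * s" using that by (metis abs_ge_self abs_mult abs_of_nonneg mult.commute)
    then show ?thesis using S(2)[OF True] S(1) by (smt (verit) mult_nonneg_nonneg abs_ge_zero)
  next
    case False
    have "s * t \<le> s * \<bar>t\<bar>" using that by (simp add: mult_left_mono)
    also have "\<dots> \<le> S * \<bar>t\<bar>" using False by (simp add: mult_right_mono)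
    finally show ?thesis using ph_nonneg[of s] by linarith
  qed
  then show ?thesis by (auto intro!: bdd_aboveI)
qed

lemma ps_ge: "s \<ge> 0 \<Longrightarrow> s * t - ph s \<le> ps t"
  unfolding ps_def' by (rule cSUP_upper[OF _ ps_bdd]) auto

lemma ps_le: "(\<And>s. s \<ge> 0 \<Longrightarrow> s * t - ph s \<le> B) \<Longrightarrow> ps t \<le> B"
  unfolding ps_def' by (rule cSUP_least) auto

lemma ps_nonneg: "ps t \<ge> 0"
  using ps_ge[of 0 t] ph_zero[of 0] by simp

lemma ps_0: "ps 0 = 0"
  using ps_le[of 0 0] ps_nonneg[of 0] ph_nonneg by force

lemma ps_convex:
  assumes "0 \<le> \<mu>" "\<mu> \<le> 1"
  shows "ps (\<mu> * a + (1 - \<mu>) * b) \<le> \<mu> * ps a + (1 - \<mu>) * ps b"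
proof (rule ps_le)
  fix s :: real assume s: "s \<ge> 0"
  have "s * (\<mu> * a + (1 - \<mu>) * b) - ph s = \<mu> * (s * a - ph s) + (1 - \<mu>) * (s * b - ph s)"
    by (simp add: algebra_simps)
  also have "\<dots> \<le> \<mu> * ps a + (1 - \<mu>) * ps b"
    using ps_ge[OF s, of a] ps_ge[OF s, of b] assms
    by (intro add_mono mult_left_mono) auto
  finally show "s * (\<mu> * a + (1 - \<mu>) * b) - ph s \<le> \<mu> * ps a + (1 - \<mu>) * ps b" .
qed

lemma a_mono:
  assumes "0 < T" "T \<le> T'"
  shows "ps T / T \<le> ps T' / T'"
proof -
  have "ps ((T/T') * T' + (1 - T/T') * 0) \<le> (T/T') * ps T' + (1 - T/T') * ps 0"
    using assms by (intro ps_convex) auto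
  then have "ps T \<le> (T/T') * ps T'" using assms by (simp add: ps_0)
  then show ?thesis using assms by (simp add: field_simps)
qed

lemma a_nonneg: "ps T / T \<ge> 0" if "T \<ge> 0"
  using ps_nonneg that by simp

definition lsl :: "real \<Rightarrow> nat \<Rightarrow> real" where
  "lsl x k = (ps (x * real k) - ps (x * (real k - 1))) / x"

lemma vartheta_eq:
  assumes "k \<ge> 1"
  shows "vartheta \<omega> x k = exp (lsl x k)"
proof -
  have "real (k - 1) = real k - 1" using assms by simp
  then show ?thesis unfolding vartheta_def W_def lsl_def
    by (simp add: exp_diff[symmetric] diff_divide_distrib)
qed

lemma W_powr:
  assumes "k \<ge> 1" "y > 0"
  shows "W \<omega> y k powr (1 / real k) = exp (ps (y * real k) / (y * real k))"
  unfolding W_def using assms by (simp add: exp_powr_real)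

lemma lsl_step:
  assumes "x > 0" "k \<ge> 1"
  shows "lsl x k \<le> lsl x (Suc k)"
proof -
  have "ps ((1/2) * (x * (real k - 1)) + (1 - 1/2) * (x * (real k + 1))) \<le>
        (1/2) * ps (x * (real k - 1)) + (1 - 1/2) * ps (x * (real k + 1))"
    by (rule ps_convex) auto
  moreover have "(1/2) * (x * (real k - 1)) + (1 - 1/2) * (x * (real k + 1)) = x * real k"
    by (simp add: algebra_simps)
  ultimately have "2 * ps (x * real k) \<le> ps (x * (real k - 1)) + ps (x * (real k + 1))" by simp
  then show ?thesis unfolding lsl_def using assms
    by (simp add: divide_right_mono algebra_simps)
qed

lemma lsl_mono:
  assumes "x > 0" "1 \<le> i" "i \<le> j"
  shows "lsl x i \<le> lsl x j"
  using assms(3,2)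
proof (induction j rule: dec_induct)
  case base then show ?case by simp
next
  case (step n) then show ?case using lsl_step[OF assms(1), of n] assms(2) by linarith
qed

lemma lsl_ge_a:
  assumes "x > 0" "k \<ge> 1"
  shows "ps (x * real k) / (x * real k) \<le> lsl x k"
proof (cases "k = 1")
  case True then show ?thesis unfolding lsl_def by (simp add: ps_0)
next
  case False
  then have k2: "real k - 1 > 0" using assms by simp
  have "ps (x * (real k - 1)) / (x * (real k - 1)) \<le> ps (x * real k) / (x * real k)"
    using assms k2 by (intro a_mono) auto
  then have "ps (x * (real k - 1)) * (x * real k) \<le> ps (x * real k) * (x * (real k - 1))"
    using assms k2 by (simp add: divide_le_eq le_divide_eq mult.commute)
  then have "x * (real k * ps (x * (real k - 1))) \<le> x * ((real k - 1) * ps (x * real k))"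
    by (simp add: ac_simps)
  then have "real k * ps (x * (real k - 1)) \<le> (real k - 1) * ps (x * real k)"
    using assms by (simp only: mult_le_cancel_left_pos)
  then have "ps (x * real k) \<le> real k * (ps (x * real k) - ps (x * (real k - 1)))"
    by (simp add: algebra_simps)
  then have "ps (x * real k) / real k \<le> ps (x * real k) - ps (x * (real k - 1))"
    using assms by (simp add: divide_le_eq mult.commute)
  then have "ps (x * real k) / real k / x \<le> (ps (x * real k) - ps (x * (real k - 1))) / x"
    using assms by (intro divide_right_mono) auto
  then show ?thesis unfolding lsl_def by (simp add: mult.commute)
qed

lemma lsl_nonneg: "x > 0 \<Longrightarrow> k \<ge> 1 \<Longrightarrow> lsl x k \<ge> 0"
  using lsl_ge_a[of x k] a_nonneg[of "x * real k"] by simp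

lemma tele: "x > 0 \<Longrightarrow> (\<Sum>i<n. lsl x (Suc i)) = ps (x * real n) / x"
proof (induction n)
  case 0 then show ?case by (simp add: ps_0)
next
  case (Suc n) then show ?case by (simp add: lsl_def diff_divide_distrib algebra_simps)
qed

end


context wf begin

lemma affine_concave: "concave_on {0..} (\<lambda>\<tau>. \<alpha> + \<beta> * \<tau>)"
  by (rule concave_on_linorderI) (auto simp: algebra_simps)

abbreviation "LC \<equiv> least_concave_majorant \<omega>"
abbreviation "MJ t \<equiv> {g t | g. concave_on {0..} g \<and> (\<forall>s\<ge>0. \<omega> s \<le> g s)}"

lemma LC_def': "LC t = Inf (MJ t)"
  unfolding least_concave_majorant_def by simp

lemma affine_major: "\<exists>\<alpha> \<beta>. \<forall>\<tau>\<ge>0. \<omega> \<tau> \<le> \<alpha> + \<beta> * \<tau>"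
proof -
  have "\<omega> \<in> O[at_top](\<lambda>t. t)" using wf unfolding weight_function_def by auto
  then obtain c where c: "c > 0" "\<forall>\<^sub>F t in at_top. norm (\<omega> t) \<le> c * norm t"
    by (rule landau_o.bigE)
  then obtain N where N: "\<And>t. t \<ge> N \<Longrightarrow> norm (\<omega> t) \<le> c * norm t"
    by (auto simp: eventually_at_top_linorder)
  show ?thesis
  proof (intro exI allI impI)
    fix \<tau> :: real assume \<tau>: "\<tau> \<ge> 0"
    show "\<omega> \<tau> \<le> \<omega> (max N 0) + c * \<tau>"
    proof (cases "\<tau> \<ge> max N 0")
      case True
      then have "norm (\<omega> \<tau>) \<le> c * norm \<tau>" by (intro N) simp
      then have "\<omega> \<tau> \<le> c * \<tau>" using \<tau> by simp
      moreover have "\<omega> (max N 0) \<ge> 0" by (rule om_nonneg) simp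
      ultimately show ?thesis by linarith
    next
      case False
      then have "\<omega> \<tau> \<le> \<omega> (max N 0)" using \<tau> by (intro om_mono) auto
      moreover have "c * \<tau> \<ge> 0" using c \<tau> by simp
      ultimately show ?thesis by linarith
    qed
  qed
qed

lemma MJ_ne: "MJ t \<noteq> {}"
proof -
  obtain \<alpha> \<beta> where "\<forall>\<tau>\<ge>0. \<omega> \<tau> \<le> \<alpha> + \<beta> * \<tau>" using affine_major by blast
  then have "(\<alpha> + \<beta> * t) \<in> MJ t"
    by (intro CollectI exI[of _ "\<lambda>\<tau>. \<alpha> + \<beta> * \<tau>"] conjI affine_concave) auto
  then show ?thesis by blast
qed

lemma LC_ge: "t \<ge> 0 \<Longrightarrow> \<omega> t \<le> LC t"
  unfolding LC_def' by (rule cInf_greatest[OF MJ_ne]) auto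

lemma LC_le:
  assumes "t \<ge> 0" "concave_on {0..} g" "\<forall>s\<ge>0. \<omega> s \<le> g s"
  shows "LC t \<le> g t"
  unfolding LC_def'
proof (rule cInf_lower)
  show "g t \<in> MJ t" using assms by blast
  show "bdd_below (MJ t)" using assms(1) by (auto intro!: bdd_belowI[of _ "\<omega> t"])
qed

lemma major_scale:
  assumes "t \<ge> 0" "l \<ge> 1" "concave_on {0..} g" "\<forall>s\<ge>0. \<omega> s \<le> g s"
  shows "\<omega> (l * t) \<le> l * g t"
proof -
  have g0: "g 0 \<ge> 0" using assms(4) om_nonneg[of 0] by force
  have "(1 - 1/l) * g 0 + (1/l) * g (l * t) \<le> g ((1 - 1/l) *\<^sub>R 0 + (1/l) *\<^sub>R (l * t))"
    using assms by (intro concave_onD) (auto simp: mult_nonneg_nonneg)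
  also have "(1 - 1/l) *\<^sub>R 0 + (1/l) *\<^sub>R (l * t) = t" using assms by simp
  finally have *: "(1 - 1/l) * g 0 + (1/l) * g (l * t) \<le> g t" .
  have "1/l \<le> 1" using assms(2) by simp
  then have "(1 - 1/l) * g 0 \<ge> 0" using g0 by simp
  then have "(1/l) * g (l * t) \<le> g t" using * by linarith
  then have "g (l * t) \<le> l * g t" using assms(2) by (simp add: field_simps)
  moreover have "\<omega> (l * t) \<le> g (l * t)" using assms by (simp add: mult_nonneg_nonneg)
  ultimately show ?thesis by linarith
qed

lemma LC_scale:
  assumes "t \<ge> 0" "l \<ge> 1"
  shows "\<omega> (l * t) \<le> l * LC t"
proof -
  have "\<omega> (l * t) / l \<le> LC t" unfolding LC_def'
  proof (rule cInf_greatest[OF MJ_ne])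
    fix z assume "z \<in> MJ t"
    then obtain g where "z = g t" "concave_on {0..} g" "\<forall>s\<ge>0. \<omega> s \<le> g s" by blast
    then show "\<omega> (l * t) / l \<le> z" using major_scale[OF assms] assms(2)
      by (simp add: divide_le_eq mult.commute)
  qed
  then show ?thesis using assms(2) by (simp add: divide_le_eq mult.commute)
qed

definition "PhiA \<longleftrightarrow> (\<exists>C>0. \<exists>r0. \<forall>r\<ge>r0. \<forall>u\<ge>0. ph (r + u) \<le> C * exp u * ph r)"

lemma equiv_PhiA:
  assumes "equivalent_weights \<omega> LC"
  shows PhiA
proof -
  have "LC \<in> O[at_top](\<omega>)" using assms unfolding equivalent_weights_def by auto
  then obtain c where c: "c > 0" "\<forall>\<^sub>F t in at_top. norm (LC t) \<le> c * norm (\<omega> t)"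
    by (rule landau_o.bigE)
  then obtain N where N: "\<And>t. t \<ge> N \<Longrightarrow> norm (LC t) \<le> c * norm (\<omega> t)"
    by (auto simp: eventually_at_top_linorder)
  have Hc: "\<forall>r\<ge>ln (max N 1). \<forall>u\<ge>0. ph (r + u) \<le> c * exp u * ph r"
  proof (intro allI impI)
    fix r u :: real assume r: "ln (max N 1) \<le> r" and u: "0 \<le> u"
    have "max N 1 = exp (ln (max N 1))" by simp
    also have "\<dots> \<le> exp r" using r by (simp only: exp_le_cancel_iff)
    finally have er: "exp r \<ge> max N 1" .
    have "norm (LC (exp r)) \<le> c * norm (\<omega> (exp r))" by (rule N) (use er in simp)
    moreover have "\<omega> (exp r) \<ge> 0" by (rule om_nonneg) simp
    moreover have "LC (exp r) \<ge> 0" using LC_ge[of "exp r"] om_nonneg[of "exp r"] by simp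
    ultimately have lc: "LC (exp r) \<le> c * \<omega> (exp r)" by simp
    have "ph (r + u) = \<omega> (exp u * exp r)" unfolding wphi_def by (simp add: exp_add mult.commute)
    also have "\<dots> \<le> exp u * LC (exp r)" by (rule LC_scale) (use u in auto)
    also have "\<dots> \<le> exp u * (c * \<omega> (exp r))" using lc by simp
    finally have "ph (r + u) \<le> exp u * (c * \<omega> (exp r))" .
    moreover have "exp u * (c * \<omega> (exp r)) = c * exp u * ph r" by (simp add: wphi_def)
    ultimately show "ph (r + u) \<le> c * exp u * ph r" by simp
  qed
  show ?thesis unfolding PhiA_def
    by (rule exI[of _ c], rule conjI[OF c(1)], rule exI[of _ "ln (max N 1)"], rule Hc)
qed

lemma PhiA_equiv:
  assumes PhiA
  shows "equivalent_weights \<omega> LC"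
proof -
  obtain C r0 where C: "C > 0" and H0: "\<forall>r\<ge>r0. \<forall>u\<ge>0. ph (r + u) \<le> C * exp u * ph r"
    using assms unfolding PhiA_def by blast
  have H: "\<And>r u. r \<ge> r0 \<Longrightarrow> u \<ge> 0 \<Longrightarrow> ph (r + u) \<le> C * exp u * ph r"
    using H0 by blast
  have ev1: "\<forall>\<^sub>F t in at_top. norm (\<omega> t) \<le> 1 * norm (LC t)"
    unfolding eventually_at_top_linorder
  proof (intro exI[of _ 0] allI impI)
    fix t :: real assume t: "t \<ge> 0"
    have a: "\<omega> t \<le> LC t" by (rule LC_ge[OF t])
    have b: "0 \<le> \<omega> t" by (rule om_nonneg[OF t])
    show "norm (\<omega> t) \<le> 1 * norm (LC t)" using a b by simp
  qed
  have 1: "\<omega> \<in> O[at_top](LC)"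
    by (rule landau_o.bigI[OF _ ev1]) simp
  have ev2: "\<forall>\<^sub>F t in at_top. norm (LC t) \<le> (1 + C) * norm (\<omega> t)"
      unfolding eventually_at_top_linorder
    proof (intro exI[of _ "exp r0"] allI impI)
      fix t assume t: "exp r0 \<le> t"
      then have t0: "t > 0" using exp_gt_zero[of r0] by linarith
      have "r0 = ln (exp r0)" by simp
      also have "\<dots> \<le> ln t" using t t0 by (subst ln_le_cancel_iff) auto
      finally have r: "ln t \<ge> r0" .
      have wt: "\<omega> t \<ge> 0" using t0 by (intro om_nonneg) simp
      define g where "g = (\<lambda>\<tau>. \<omega> t + (C * \<omega> t / t) * \<tau>)"
      have gc: "concave_on {0..} g" unfolding g_def by (rule affine_concave)
      have gm: "\<forall>s\<ge>0. \<omega> s \<le> g s"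
      proof (intro allI impI)
        fix s :: real assume s: "s \<ge> 0"
        have nn: "(C * \<omega> t / t) * s \<ge> 0" using C wt t0 s by simp
        show "\<omega> s \<le> g s"
        proof (cases "s \<le> t")
          case True
          then show ?thesis using om_mono[OF s True] nn unfolding g_def by linarith
        next
          case False
          then have s0: "s > 0" using t0 by linarith
          have u: "ln (s / t) \<ge> 0" using False t0 by simp
          have e: "exp (ln t + ln (s / t)) = s" using s0 t0 by (simp add: exp_add)
          have "\<omega> s = ph (ln t + ln (s / t))" unfolding wphi_def e ..
          also have "\<dots> \<le> C * exp (ln (s / t)) * ph (ln t)" by (rule H[OF r u])
          also have "exp (ln (s / t)) = s / t" using s0 t0 by simp
          also have "ph (ln t) = \<omega> t" unfolding wphi_def using t0 by simp
          also have "C * (s / t) * \<omega> t = (C * \<omega> t / t) * s" by simp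
          finally show ?thesis unfolding g_def using wt by linarith
        qed
      qed
      have "LC t \<le> g t" using LC_le[OF _ gc gm] t0 by simp
      also have "g t = (1 + C) * \<omega> t" unfolding g_def using t0 by (simp add: field_simps)
      finally have "LC t \<le> (1 + C) * \<omega> t" .
      moreover have "LC t \<ge> 0" using LC_ge[of t] wt t0 by simp
      ultimately show "norm (LC t) \<le> (1 + C) * norm (\<omega> t)" using wt by simp
    qed
  have 2: "LC \<in> O[at_top](\<omega>)"
    by (rule landau_o.bigI[OF _ ev2]) (use C in simp)
  show ?thesis unfolding equivalent_weights_def using 1 2 by blast
qed

end


context wf begin

definition "PsiA \<longleftrightarrow> (\<exists>c t1. t1 > 0 \<and> (\<forall>t\<ge>t1. \<forall>l\<ge>1. ps t / t + ln l - c \<le> ps (l * t) / (l * t)))"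

lemma PhiA_PsiA:
  assumes PhiA
  shows PsiA
proof -
  obtain C r0 where C: "C > 0" and H0: "\<forall>r\<ge>r0. \<forall>u\<ge>0. ph (r + u) \<le> C * exp u * ph r"
    using assms unfolding PhiA_def by blast
  define C' where "C' = max C 1"
  define r1 where "r1 = max r0 0"
  have C'1: "C' \<ge> 1" unfolding C'_def by simp
  have r1: "r1 \<ge> 0" unfolding r1_def by simp
  have H: "ph (r + u) \<le> C' * exp u * ph r" if "r \<ge> r1" "u \<ge> 0" for r u
  proof -
    have "ph (r + u) \<le> C * exp u * ph r" using H0 that unfolding r1_def by auto
    also have "\<dots> \<le> C' * exp u * ph r" unfolding C'_def
      by (intro mult_right_mono ph_nonneg) auto
    finally show ?thesis .
  qed
  have K: "ps t / t + u \<le> ps (C' * exp u * t) / (C' * exp u * t)"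
    if t: "t > 0" and u: "u \<ge> 0" and big: "ps t > r1 * t" for t u
  proof -
    define l where "l = C' * exp u"
    have eu: "exp u \<ge> 1" using u by simp
    have "1 * 1 \<le> C' * exp u" using C'1 eu by (intro mult_mono) auto
    then have l0: "l > 0" "l \<ge> 1" unfolding l_def by auto
    have "ps t \<le> max (r1 * t) (ps (l * t) / l - u * t)"
    proof (rule ps_le)
      fix s :: real assume s: "s \<ge> 0"
      show "s * t - ph s \<le> max (r1 * t) (ps (l * t) / l - u * t)"
      proof (cases "s < r1")
        case True
        then have "s * t \<le> r1 * t" using t by simp
        then show ?thesis using ph_nonneg[of s] by linarith
      next
        case False
        then have "ph (s + u) \<le> l * ph s" using H[of s u] u unfolding l_def by simp
        moreover have "(s + u) * (l * t) - ph (s + u) \<le> ps (l * t)" using s u by (intro ps_ge) simp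
        ultimately have "(s + u) * (l * t) - l * ph s \<le> ps (l * t)" by linarith
        then have "l * (s * t - ph s) \<le> ps (l * t) - l * (u * t)" by (simp add: algebra_simps)
        then have "s * t - ph s \<le> (ps (l * t) - l * (u * t)) / l" using l0
          by (simp add: le_divide_eq mult.commute)
        also have "\<dots> = ps (l * t) / l - u * t" using l0 by (simp add: field_simps)
        finally show ?thesis by linarith
      qed
    qed
    then have "ps t \<le> ps (l * t) / l - u * t" using big by linarith
    then have "ps t / t \<le> (ps (l * t) / l - u * t) / t" using t by (intro divide_right_mono) auto
    also have "\<dots> = ps (l * t) / (l * t) - u" using t l0 by (simp add: field_simps)
    finally show ?thesis unfolding l_def by simp
  qed
  define t1 where "t1 = ph (r1 + 1) + 1"
  have t1: "t1 > 0" unfolding t1_def using ph_nonneg[of "r1 + 1"] by linarith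
  have big: "ps t > r1 * t" if "t \<ge> t1" for t
  proof -
    have "(r1 + 1) * t - ph (r1 + 1) \<le> ps t" using r1 by (intro ps_ge) simp
    moreover have "ph (r1 + 1) < t" using that unfolding t1_def by linarith
    ultimately show ?thesis by (simp add: algebra_simps)
  qed
  have "\<forall>t\<ge>t1. \<forall>l\<ge>1. ps t / t + ln l - ln C' \<le> ps (l * t) / (l * t)"
  proof (intro allI impI)
    fix t l :: real assume t: "t \<ge> t1" and l: "l \<ge> 1"
    have t0: "t > 0" using t t1 by linarith
    show "ps t / t + ln l - ln C' \<le> ps (l * t) / (l * t)"
    proof (cases "l \<ge> C'")
      case True
      define u where "u = ln (l / C')"
      have u: "u \<ge> 0" unfolding u_def using True C'1 by simp
      have e: "C' * exp u = l" unfolding u_def using True C'1 by simp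
      have "ps t / t + u \<le> ps (l * t) / (l * t)" using K[OF t0 u big[OF t]] unfolding e .
      moreover have "u = ln l - ln C'" unfolding u_def using True C'1 by (simp add: ln_div)
      ultimately show ?thesis by simp
    next
      case False
      then have "ln l \<le> ln C'" using l by simp
      moreover have "ps t / t \<le> ps (l * t) / (l * t)" using t0 l
        by (intro a_mono) (auto intro: order_trans[OF _ mult_right_mono[of 1 l t]])
      ultimately show ?thesis by linarith
    qed
  qed
  then show ?thesis unfolding PsiA_def using t1 by blast
qed

lemma subgrad: "\<exists>g. \<forall>s. ph R + g * (s - R) \<le> ph s"
proof -
  define S where "S = (\<lambda>s. (ph R - ph s) / (R - s)) ` {..<R}"
  have slope: "(ph R - ph s) / (R - s) \<le> (ph u - ph R) / (u - R)" if "s < R" "R < u" for s u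
  proof -
    have "(ph s - ph R) / (s - R) \<le> (ph s - ph u) / (s - u)"
      by (rule convex_on_slope_le(1)[OF ph_convex]) (use that in auto)
    moreover have "(ph s - ph u) / (s - u) \<le> (ph R - ph u) / (R - u)"
      by (rule convex_on_slope_le(2)[OF ph_convex]) (use that in auto)
    moreover have "(ph s - ph R) / (s - R) = (ph R - ph s) / (R - s)"
      by (metis minus_diff_eq minus_divide_divide)
    moreover have "(ph R - ph u) / (R - u) = (ph u - ph R) / (u - R)"
      by (metis minus_diff_eq minus_divide_divide)
    ultimately show ?thesis by linarith
  qed
  have Sne: "S \<noteq> {}" unfolding S_def by auto
  have Sbdd: "bdd_above S"
  proof (rule bdd_aboveI)
    fix z assume "z \<in> S"
    then obtain s where s: "s < R" "z = (ph R - ph s) / (R - s)" unfolding S_def by auto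
    show "z \<le> (ph (R + 1) - ph R) / (R + 1 - R)" unfolding s(2) by (rule slope) (use s in auto)
  qed
  define g where "g = Sup S"
  have "ph R + g * (s - R) \<le> ph s" for s
  proof (cases s R rule: linorder_cases)
    case less
    have "(ph R - ph s) / (R - s) \<le> g" unfolding g_def
      by (rule cSup_upper[OF _ Sbdd]) (use less in \<open>unfold S_def, blast\<close>)
    then have "ph R - ph s \<le> g * (R - s)" using less by (simp add: divide_le_eq)
    then show ?thesis by (simp add: algebra_simps)
  next
    case equal then show ?thesis by simp
  next
    case greater
    have "g \<le> (ph s - ph R) / (s - R)" unfolding g_def
    proof (rule cSup_least[OF Sne])
      fix z assume "z \<in> S"
      then obtain s' where s': "s' < R" "z = (ph R - ph s') / (R - s')" unfolding S_def by auto
      show "z \<le> (ph s - ph R) / (s - R)" unfolding s'(2) by (rule slope) (use s' greater in auto)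
    qed
    then have "g * (s - R) \<le> ph s - ph R" using greater by (simp add: le_divide_eq)
    then show ?thesis by (simp add: algebra_simps)
  qed
  then show ?thesis by blast
qed

lemma ps_subgrad:
  assumes "R \<ge> 0" "\<forall>s. ph R + g * (s - R) \<le> ph s"
  shows "ps g = R * g - ph R"
proof (rule antisym)
  show "ps g \<le> R * g - ph R"
  proof (rule ps_le)
    fix s :: real
    have "ph R + g * (s - R) \<le> ph s" using assms by blast
    then show "s * g - ph s \<le> R * g - ph R" by (simp add: algebra_simps)
  qed
  show "R * g - ph R \<le> ps g" using assms(1) by (rule ps_ge)
qed

lemma theta_ln: "0 < (\<theta>::real) \<Longrightarrow> - (\<theta> * ln \<theta>) \<le> 1 - \<theta>"
proof -
  assume th: "0 < \<theta>"
  have "ln (1 / \<theta>) \<le> 1 / \<theta> - 1" using th by (intro ln_le_minus_one) simp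
  then have "- ln \<theta> \<le> 1 / \<theta> - 1" using th by (simp add: ln_div)
  then have "\<theta> * (- ln \<theta>) \<le> \<theta> * (1 / \<theta> - 1)" using th by (intro mult_left_mono) auto
  then show ?thesis using th by (simp add: algebra_simps)
qed

end


context wf begin

lemma PsiA_PhiA:
  assumes PsiA
  shows PhiA
proof -
  obtain c t1 where t1: "t1 > 0" and PA0: "\<forall>t\<ge>t1. \<forall>l\<ge>1. ps t / t + ln l - c \<le> ps (l * t) / (l * t)"
    using assms unfolding PsiA_def by blast
  define c' where "c' = max c 0"
  define T where "T = max t1 1"
  have c': "c' \<ge> 0" "c \<le> c'" unfolding c'_def by auto
  have T: "T \<ge> 1" "T > 0" "T \<ge> t1" unfolding T_def by auto
  have PA: "ps t / t + ln l - c' \<le> ps (l * t) / (l * t)" if "t \<ge> T" "l \<ge> 1" for t l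
  proof -
    have "ps t / t + ln l - c \<le> ps (l * t) / (l * t)" using PA0 that T(3) by auto
    then show ?thesis using c' by linarith
  qed
  define c2 where "c2 = c' - ps T / T + ln T"
  have LB: "ln g - c2 \<le> ps g / g" if g: "g \<ge> T" for g
  proof -
    have l: "g / T \<ge> 1" using g T by simp
    have "ps T / T + ln (g / T) - c' \<le> ps (g / T * T) / (g / T * T)" by (rule PA[OF _ l]) simp
    moreover have "g / T * T = g" using T by simp
    moreover have "ln (g / T) = ln g - ln T" using T g by (simp add: ln_div)
    ultimately show ?thesis unfolding c2_def by simp
  qed
  define M where "M = T * exp c'"
  have M: "M > 0" unfolding M_def using T by simp
  obtain S1 where S1: "S1 \<ge> 0" "\<forall>s\<ge>S1. 1 * s \<le> ph s" using ph_superlin[of 1] by blast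
  define r0 where "r0 = max (max S1 1) \<bar>c2 - ln M\<bar>"
  define K where "K = max (exp c') (max (3 * M) (2 * T))"
  have K1: "exp c' \<le> K" "3 * M \<le> K" "2 * T \<le> K" unfolding K_def by auto
  have K: "K > 0" "exp c' \<le> K" "3 * M \<le> K" "2 * T \<le> K"
    using K1 exp_gt_zero[of c'] by linarith+
  have main: "ph (r + u) \<le> K * exp u * ph r" if r: "r \<ge> r0" and u: "u \<ge> 0" for r u
  proof -
    have r1: "r \<ge> 1" and rS: "r \<ge> S1" and rc: "\<bar>c2 - ln M\<bar> \<le> r" using r unfolding r0_def by auto
    have rph: "r \<le> ph r" using S1 rS by auto
    define R where "R = r + u"
    have R0: "R \<ge> 0" unfolding R_def using r1 u by simp
    obtain g where sg: "\<forall>s. ph R + g * (s - R) \<le> ph s" using subgrad[of R] by blast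
    have E: "ph R = R * g - ps g" using ps_subgrad[OF R0 sg] by simp
    have eu: "exp u \<ge> 1" using u by simp
    have phr: "ph r \<ge> 1" using rph r1 by linarith
    show ?thesis
    proof (cases "g \<ge> M * exp u")
      case True
      define l where "l = exp (u + c')"
      have l: "l \<ge> 1" "l > 0" unfolding l_def using u c' by auto
      have lM: "M * exp u = T * l" unfolding l_def M_def by (simp add: exp_add)
      define t where "t = g / l"
      have tT: "t \<ge> T" unfolding t_def using True lM l by (simp add: le_divide_eq mult.commute)
      have t0: "t > 0" using tT T by linarith
      have g0: "g > 0" using True M by (smt (verit) exp_gt_zero mult_pos_pos)
      have lt: "l * t = g" unfolding t_def using l by simp
      have "ps t / t + ln l - c' \<le> ps (l * t) / (l * t)" by (rule PA[OF tT l(1)])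
      moreover have "ln l = u + c'" unfolding l_def by simp
      ultimately have pt: "ps t / t \<le> ps g / g - u" unfolding lt by simp
      have "r * t - ph r \<le> ps t" using r1 by (intro ps_ge) simp
      then have "t * (r - ps t / t) \<le> ph r" using t0 by (simp add: algebra_simps)
      moreover have "t * (R - ps g / g) \<le> t * (r - ps t / t)"
        using pt t0 unfolding R_def by (intro mult_left_mono) auto
      moreover have "t * (R - ps g / g) = ph R / l"
        unfolding E t_def using g0 l by (simp add: field_simps)
      ultimately have "ph R / l \<le> ph r" by linarith
      then have "ph R \<le> l * ph r" using l by (simp add: divide_le_eq mult.commute)
      also have "l * ph r = exp c' * exp u * ph r" unfolding l_def by (simp add: exp_add)
      also have "\<dots> \<le> K * exp u * ph r" using K phr by (intro mult_right_mono) auto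
      finally show ?thesis unfolding R_def .
    next
      case False
      show ?thesis
      proof (cases "g \<ge> T")
        case True
        have g0: "g > 0" using True T by linarith
        have "(ln g - c2) * g \<le> ps g / g * g" using LB[OF True] g0 by (intro mult_right_mono) auto
        then have "g * (ln g - c2) \<le> ps g" using g0 by (simp add: mult.commute)
        then have phR: "ph R \<le> g * (R - ln g + c2)" unfolding E by (simp add: algebra_simps)
        define \<theta> where "\<theta> = g / (M * exp u)"
        have th: "\<theta> > 0" "\<theta> \<le> 1" unfolding \<theta>_def using g0 M False by (auto simp: divide_le_eq)
        have gth: "g = \<theta> * M * exp u" unfolding \<theta>_def using M by simp
        have lng: "ln g = ln \<theta> + ln M + u" unfolding gth using th M by (simp add: ln_mult)
        define D where "D = r - ln M + c2"
        have D: "D \<ge> 0" "D + 1 \<le> 3 * r" unfolding D_def using rc r1 by auto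
        have "g * (R - ln g + c2) = M * exp u * (\<theta> * D + (- (\<theta> * ln \<theta>)))"
          unfolding lng R_def D_def by (subst gth) (simp add: algebra_simps)
        also have "\<dots> \<le> M * exp u * (D + 1)"
        proof -
          have "\<theta> * D \<le> D" using th D by (simp add: mult_left_le_one_le)
          moreover have "- (\<theta> * ln \<theta>) \<le> 1" using theta_ln[OF th(1)] th by linarith
          ultimately show ?thesis using M by (intro mult_left_mono) auto
        qed
        also have "\<dots> \<le> M * exp u * (3 * ph r)" using D rph M by (intro mult_left_mono) auto
        also have "\<dots> = (3 * M) * exp u * ph r" by simp
        also have "\<dots> \<le> K * exp u * ph r" using K phr by (intro mult_right_mono) auto
        finally show ?thesis using phR unfolding R_def by linarith
      next
        case False
        have "ph R \<le> R * g" unfolding E using ps_nonneg[of g] by linarith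
        also have "\<dots> \<le> R * T" using False R0 by (intro mult_left_mono) auto
        also have "R \<le> 2 * r * exp u"
        proof -
          have "1 + u \<le> exp u" by (rule exp_ge_add_one_self)
          moreover have "r \<le> r * exp u" using eu r1 by simp
          moreover have "exp u \<le> r * exp u" using r1 by simp
          ultimately show ?thesis unfolding R_def by linarith
        qed
        then have "R * T \<le> 2 * r * exp u * T" using T by (intro mult_right_mono) auto
        also have "\<dots> \<le> 2 * ph r * exp u * T" using rph T by (intro mult_right_mono) auto
        also have "\<dots> = (2 * T) * exp u * ph r" by simp
        also have "\<dots> \<le> K * exp u * ph r" using K phr by (intro mult_right_mono) auto
        finally show ?thesis unfolding R_def .
      qed
    qed
  qed
  have "\<forall>r\<ge>r0. \<forall>u\<ge>0. ph (r + u) \<le> K * exp u * ph r" using main by blast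
  then show ?thesis unfolding PhiA_def using K(1) by blast
qed

end


lemma sum_split_lt: "(\<Sum>i<a + b. f i) = (\<Sum>i<a. f i) + (\<Sum>i<b. f (a + i))" for f :: "nat \<Rightarrow> real"
  by (induction b) (simp_all add: add.assoc)

lemma lnfact: "(\<Sum>i<n. ln (real (Suc i))) \<ge> real n * ln (real n) - real n"
proof (induction n)
  case 0 then show ?case by simp
next
  case (Suc n)
  have key: "real n * ln (real n + 1) \<le> real n * ln (real n) + 1"
  proof (cases "n = 0")
    case True then show ?thesis by simp
  next
    case False
    then have n0: "real n > 0" by simp
    have "ln ((real n + 1) / real n) \<le> (real n + 1) / real n - 1"
      using n0 by (intro ln_le_minus_one) simp
    also have "\<dots> = 1 / real n" using n0 by (simp add: field_simps)
    finally have "ln (real n + 1) - ln (real n) \<le> 1 / real n" using n0 by (simp add: ln_div)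
    then have "real n * (ln (real n + 1) - ln (real n)) \<le> real n * (1 / real n)"
      using n0 by (intro mult_left_mono) auto
    then show ?thesis using n0 by (simp add: algebra_simps)
  qed
  have "(\<Sum>i<Suc n. ln (real (Suc i))) = (\<Sum>i<n. ln (real (Suc i))) + ln (real n + 1)" by simp
  also have "\<dots> \<ge> real n * ln (real n) - real n + ln (real n + 1)" using Suc by simp
  finally show ?case using key by (simp add: algebra_simps)
qed

context wf begin

lemma good_log:
  assumes "x > 0" "y > 0" "Cc \<ge> 0"
    and "\<And>j k. 1 \<le> j \<Longrightarrow> j \<le> k \<Longrightarrow> lsl x j - ln (real j) \<le> Cc + lsl y k - ln (real k)"
  shows "\<forall>j k. 1 \<le> j \<and> j \<le> k \<longrightarrow> vartheta \<omega> x j / real j \<le> exp Cc * vartheta \<omega> y k / real k"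
proof (intro allI impI)
  fix j k :: nat assume jk: "1 \<le> j \<and> j \<le> k"
  then have j: "j \<ge> 1" "k \<ge> 1" "j \<le> k" by auto
  have "exp (lsl x j - ln (real j)) \<le> exp (Cc + lsl y k - ln (real k))"
    using assms(4)[OF j(1) j(3)] by simp
  moreover have "exp (lsl x j - ln (real j)) = vartheta \<omega> x j / real j"
    using j by (simp add: exp_diff vartheta_eq)
  moreover have "exp (Cc + lsl y k - ln (real k)) = exp Cc * vartheta \<omega> y k / real k"
    using j by (simp add: exp_diff exp_add vartheta_eq)
  ultimately show "vartheta \<omega> x j / real j \<le> exp Cc * vartheta \<omega> y k / real k" by simp
qed

lemma log_good:
  assumes "x > 0" "y > 0" "C \<ge> 1" "1 \<le> j" "j \<le> k"
    and "vartheta \<omega> x j / real j \<le> C * vartheta \<omega> y k / real k"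
  shows "lsl x j - ln (real j) \<le> ln C + lsl y k - ln (real k)"
proof -
  have "exp (lsl x j - ln (real j)) = vartheta \<omega> x j / real j"
    using assms by (simp add: exp_diff vartheta_eq)
  moreover have "exp (ln C + lsl y k - ln (real k)) = C * vartheta \<omega> y k / real k"
    using assms by (simp add: exp_diff exp_add vartheta_eq)
  ultimately have "exp (lsl x j - ln (real j)) \<le> exp (ln C + lsl y k - ln (real k))"
    using assms(6) by simp
  then show ?thesis by simp
qed

lemma H_log:
  assumes "y > 0" "A > 0" "k \<ge> 1" "vartheta \<omega> x k \<le> A * W \<omega> y k powr (1 / real k)"
  shows "lsl x k \<le> ln A + ps (y * real k) / (y * real k)"
proof -
  have "exp (lsl x k) \<le> A * exp (ps (y * real k) / (y * real k))"
    using assms by (simp add: vartheta_eq W_powr)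
  also have "\<dots> = exp (ln A + ps (y * real k) / (y * real k))" using assms by (simp add: exp_add)
  finally show ?thesis by simp
qed

end


context wf begin

lemma PsiA_good:
  assumes PsiA
    and H: "\<forall>x>0. \<exists>y>0. \<exists>A>0. \<forall>k::nat. k \<ge> 1 \<longrightarrow> vartheta \<omega> x k \<le> A * W \<omega> y k powr (1 / real k)"
  shows "good_weight \<omega>"
  unfolding good_weight_def
proof (intro allI impI)
  fix x :: real assume x: "x > 0"
  obtain c t1 where t1: "t1 > 0" and PA0: "\<forall>t\<ge>t1. \<forall>l\<ge>1. ps t / t + ln l - c \<le> ps (l * t) / (l * t)"
    using assms(1) unfolding PsiA_def by blast
  have PA: "ps t / t + ln l - c \<le> ps (l * t) / (l * t)" if "t \<ge> t1" "l \<ge> 1" for t l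
    using PA0 that by blast
  obtain y A where y: "y > 0" and A: "A > 0"
    and HA0: "\<forall>k::nat. k \<ge> 1 \<longrightarrow> vartheta \<omega> x k \<le> A * W \<omega> y k powr (1 / real k)"
    using H x by blast
  have HA: "lsl x k \<le> ln A + ps (y * real k) / (y * real k)" if "k \<ge> 1" for k
    using H_log[OF y A that] HA0 that by blast
  define c' where "c' = max c 0"
  define J where "J = nat \<lceil>t1 / y\<rceil> + 1"
  define Cc where "Cc = max (max (ln A + c') (lsl x J + \<bar>ln (t1 / y)\<bar> + c')) 0"
  have J1: "J \<ge> 1" unfolding J_def by simp
  have Cc: "Cc \<ge> 0" "ln A + c' \<le> Cc" "lsl x J + \<bar>ln (t1 / y)\<bar> + c' \<le> Cc" unfolding Cc_def by auto
  have c': "c \<le> c'" "c' \<ge> 0" unfolding c'_def by auto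
  have main: "lsl x j - ln (real j) \<le> Cc + lsl y k - ln (real k)" if j: "1 \<le> j" "j \<le> k" for j k
  proof -
    have k1: "k \<ge> 1" using j by simp
    have ayk: "ps (y * real k) / (y * real k) \<le> lsl y k" by (rule lsl_ge_a[OF y k1])
    show ?thesis
    proof (cases "y * real j \<ge> t1")
      case True
      have l: "real k / real j \<ge> 1" using j by simp
      have "ps (y * real j) / (y * real j) + ln (real k / real j) - c
            \<le> ps (real k / real j * (y * real j)) / (real k / real j * (y * real j))"
        by (rule PA[OF True l])
      moreover have "real k / real j * (y * real j) = y * real k" using j by simp
      moreover have "ln (real k / real j) = ln (real k) - ln (real j)" using j by (simp add: ln_div)
      ultimately have "ps (y * real j) / (y * real j) + ln (real k) - ln (real j) - c
            \<le> ps (y * real k) / (y * real k)" by simp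
      moreover have "lsl x j \<le> ln A + ps (y * real j) / (y * real j)" by (rule HA[OF j(1)])
      ultimately show ?thesis using ayk Cc c' by linarith
    next
      case False
      then have "real j < t1 / y" using y by (simp add: mult.commute pos_less_divide_eq)
      then have "j \<le> J" unfolding J_def by linarith
      then have lj: "lsl x j \<le> lsl x J" by (rule lsl_mono[OF x j(1)])
      have lnj: "ln (real j) \<ge> 0" using j by simp
      have "ln (real k) - lsl y k \<le> \<bar>ln (t1 / y)\<bar> + c'"
      proof (cases "y * real k \<ge> t1")
        case True
        have l: "y * real k / t1 \<ge> 1" using True t1 by simp
        have e: "y * real k / t1 * t1 = y * real k" using t1 by simp
        have "ps t1 / t1 + ln (y * real k / t1) - c \<le> ps (y * real k / t1 * t1) / (y * real k / t1 * t1)"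
          by (rule PA[OF _ l]) simp
        then have "ps t1 / t1 + ln (y * real k / t1) - c \<le> ps (y * real k) / (y * real k)"
          unfolding e .
        moreover have "ln (y * real k / t1) = ln (real k) - ln (t1 / y)"
          using t1 y k1 by (simp add: ln_div ln_mult)
        moreover have "ps t1 / t1 \<ge> 0" using t1 a_nonneg by simp
        ultimately show ?thesis using ayk c' by linarith
      next
        case False
        then have "real k < t1 / y" using y by (simp add: mult.commute pos_less_divide_eq)
        then have "ln (real k) \<le> ln (t1 / y)" using k1 by simp
        moreover have "lsl y k \<ge> 0" by (rule lsl_nonneg[OF y k1])
        ultimately show ?thesis using c' by linarith
      qed
      then show ?thesis using lj lnj Cc by linarith
    qed
  qed
  have "\<forall>j k. 1 \<le> j \<and> j \<le> k \<longrightarrow> vartheta \<omega> x j / real j \<le> exp Cc * vartheta \<omega> y k / real k"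
    by (rule good_log[OF x y Cc(1) main])
  moreover have "exp Cc \<ge> 1" using Cc by simp
  ultimately show "\<exists>y>0. \<exists>C\<ge>1. \<forall>j k. 1 \<le> j \<and> j \<le> k \<longrightarrow> vartheta \<omega> x j / real j \<le> C * vartheta \<omega> y k / real k"
    using y by blast
qed

end


context wf begin

lemma good_PsiA:
  assumes "good_weight \<omega>"
  shows PsiA
proof -
  obtain y C where y: "y > 0" and C: "C \<ge> 1"
    and G0: "\<forall>j k. 1 \<le> j \<and> j \<le> k \<longrightarrow> vartheta \<omega> 1 j / real j \<le> C * vartheta \<omega> y k / real k"
    using assms unfolding good_weight_def by (meson zero_less_one)
  have G: "lsl 1 j - ln (real j) \<le> ln C + lsl y i - ln (real i)" if "1 \<le> j" "j \<le> i" for j i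
    by (rule log_good[OF _ y C that]) (use G0 that in auto)
  define c where "c = ln C"
  have c0: "c \<ge> 0" unfolding c_def using C by simp
  define D where "D = ln 2 + 1 + c"
  have D0: "D \<ge> 0" unfolding D_def using c0 by simp
  have block: "(\<Sum>i<k * n. lsl y (Suc i)) \<ge> real n * (\<Sum>j<k. lsl 1 (Suc j)) + real n * real k * (ln (real n) - D)"
    if n: "n \<ge> 1" and k: "k \<ge> 1" for n k
    using k
  proof (induction k rule: dec_induct)
    case base
    have "(\<Sum>i<n. lsl 1 1 + ln (real (Suc i)) - c) \<le> (\<Sum>i<n. lsl y (Suc i))"
    proof (rule sum_mono)
      fix i assume "i \<in> {..<n}"
      have "lsl 1 1 - ln (real 1) \<le> ln C + lsl y (Suc i) - ln (real (Suc i))" by (rule G) auto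
      then show "lsl 1 1 + ln (real (Suc i)) - c \<le> lsl y (Suc i)" unfolding c_def by simp
    qed
    moreover have "(\<Sum>i<n. lsl 1 1 + ln (real (Suc i)) - c) = real n * lsl 1 1 + (\<Sum>i<n. ln (real (Suc i))) - real n * c"
      by (simp add: sum.distrib sum_subtractf)
    moreover have "(\<Sum>i<n. ln (real (Suc i))) \<ge> real n * ln (real n) - real n" by (rule lnfact)
    moreover have "real n * ln 2 \<ge> 0" by simp
    moreover have "real n * (\<Sum>j<1. lsl 1 (Suc j)) + real n * real 1 * (ln (real n) - D)
       = real n * lsl 1 1 + real n * ln (real n) - real n * ln 2 - real n - real n * c"
      by (simp add: D_def algebra_simps)
    moreover have "(\<Sum>i<1 * n. lsl y (Suc i)) = (\<Sum>i<n. lsl y (Suc i))" by simp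
    ultimately show ?case by linarith
  next
    case (step k)
    have blk: "(\<Sum>i<n. lsl 1 (Suc k) + ln (real n) - D) \<le> (\<Sum>i<n. lsl y (Suc (k * n + i)))"
    proof (rule sum_mono)
      fix i assume "i \<in> {..<n}"
      have "k * 1 \<le> k * n" using n by (rule mult_le_mono2)
      then have kn: "k \<le> k * n + i" by linarith
      have "lsl 1 (Suc k) - ln (real (Suc k)) \<le> ln C + lsl y (Suc (k * n + i)) - ln (real (Suc (k * n + i)))"
        by (rule G) (use kn in auto)
      moreover have "ln (real n) - ln 2 \<le> ln (real (Suc (k * n + i))) - ln (real (Suc k))"
      proof -
        have a: "1 * n \<le> k * n" using step(1) by (rule mult_le_mono1)
        have b: "n * Suc k = k * n + n" by simp
        obtain m where m: "m = k * n" by blast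
        have "n * Suc k \<le> 2 * Suc (m + i)" using a b unfolding m[symmetric] by simp
        then have "n * Suc k \<le> 2 * Suc (k * n + i)" unfolding m .
        then have "real n * real (Suc k) \<le> 2 * real (Suc (k * n + i))"
          by (metis of_nat_le_iff of_nat_mult of_nat_numeral)
        then have "ln (real n * real (Suc k)) \<le> ln (2 * real (Suc (k * n + i)))"
        proof (subst ln_le_cancel_iff)
          show "0 < real n * real (Suc k)" using n by simp
          have pos: "(0::real) < real (Suc (k * n + i))" by (simp only: of_nat_0_less_iff)
          show "0 < 2 * real (Suc (k * n + i))" by (rule mult_pos_pos[OF _ pos]) simp
        qed (rule \<open>real n * real (Suc k) \<le> 2 * real (Suc (k * n + i))\<close>)
        moreover have "ln (real n * real (Suc k)) = ln (real n) + ln (real (Suc k))"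
          using n by (subst ln_mult) auto
        moreover have "ln (2 * real (Suc (k * n + i))) = ln 2 + ln (real (Suc (k * n + i)))"
          by (subst ln_mult) (simp del: of_nat_Suc)
        ultimately show ?thesis by linarith
      qed
      ultimately show "lsl 1 (Suc k) + ln (real n) - D \<le> lsl y (Suc (k * n + i))"
        unfolding D_def c_def by simp
    qed
    have "(\<Sum>i<Suc k * n. lsl y (Suc i)) = (\<Sum>i<k * n. lsl y (Suc i)) + (\<Sum>i<n. lsl y (Suc (k * n + i)))"
    proof -
      have sk: "Suc k * n = k * n + n" by simp
      show ?thesis unfolding sk by (rule sum_split_lt)
    qed
    moreover have "(\<Sum>i<n. lsl 1 (Suc k) + ln (real n) - D) = real n * (lsl 1 (Suc k) + ln (real n) - D)"
      by simp
    moreover have "(\<Sum>j<Suc k. lsl 1 (Suc j)) = (\<Sum>j<k. lsl 1 (Suc j)) + lsl 1 (Suc k)" by simp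
    ultimately show ?case using step(3) blk by (simp add: algebra_simps)
  qed
  have akn: "ps (real k) / real k + ln (real n) - D \<le> ps (y * real (k * n)) / (y * real (k * n))"
    if n: "n \<ge> 1" and k: "k \<ge> 1" for n k
  proof -
    have "ps (y * real (k * n)) / y \<ge> real n * ps (real k) + real n * real k * (ln (real n) - D)"
      using block[OF n k] tele[OF y, of "k * n"] tele[of 1 k] by simp
    then have "ps (y * real (k * n)) \<ge> y * (real n * ps (real k) + real n * real k * (ln (real n) - D))"
      using y by (simp add: le_divide_eq mult.commute)
    then have "ps (y * real (k * n)) / (y * real (k * n)) \<ge>
        y * (real n * ps (real k) + real n * real k * (ln (real n) - D)) / (y * real (k * n))"
      using y n k by (intro divide_right_mono) auto
    also have "y * (real n * ps (real k) + real n * real k * (ln (real n) - D)) / (y * real (k * n))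
        = ps (real k) / real k + ln (real n) - D"
      using y n k by (simp add: field_simps)
    finally show ?thesis .
  qed
  have "\<forall>t\<ge>1. \<forall>l\<ge>1. ps t / t + ln l - (ln (4 * y) + D) \<le> ps (l * t) / (l * t)"
  proof (intro allI impI)
    fix t l :: real assume t: "t \<ge> 1" and l: "l \<ge> 1"
    define k where "k = nat \<lceil>t\<rceil>"
    have kt: "real k \<ge> t" "real k \<le> 2 * t" "k \<ge> 1" unfolding k_def using t by linarith+
    have at: "ps t / t \<le> ps (real k) / real k" using t kt by (intro a_mono) auto
    have alt: "ps t / t \<le> ps (l * t) / (l * t)" using t l by (intro a_mono) (auto intro: order_trans[OF _ mult_right_mono[of 1 l t]])
    show "ps t / t + ln l - (ln (4 * y) + D) \<le> ps (l * t) / (l * t)"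
    proof (cases "l \<ge> 4 * y")
      case False
      then have "ln l \<le> ln (4 * y)" using l by simp
      then show ?thesis using alt D0 by linarith
    next
      case True
      define q where "q = l * t / (y * real k)"
      have q0: "q \<ge> l / (2 * y)" unfolding q_def using kt y t l
        by (simp add: field_simps mult_left_mono)
      have "2 \<le> l / (2 * y)" using True y by (simp add: le_divide_eq)
      then have q2: "q \<ge> 2" using q0 by linarith
      define n where "n = nat \<lfloor>q\<rfloor>"
      have nq: "real n \<le> q" "real n \<ge> q - 1" "n \<ge> 1" unfolding n_def using q2 by linarith+
      have nl: "real n \<ge> l / (4 * y)" using nq q0 q2 by (simp add: field_simps) 
      have "ln (l / (4 * y)) \<le> ln (real n)" using nl l y nq(3) by (subst ln_le_cancel_iff) auto
      then have lnn: "ln l - ln (4 * y) \<le> ln (real n)" using l y by (simp add: ln_div)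
      have yknl: "y * real (k * n) \<le> l * t"
      proof -
        have "y * real k * real n \<le> y * real k * q" using nq y kt by (intro mult_left_mono) auto
        also have "y * real k * q = l * t" unfolding q_def using y kt by simp
        finally show ?thesis by (simp add: mult.assoc)
      qed
      have "ps (y * real (k * n)) / (y * real (k * n)) \<le> ps (l * t) / (l * t)"
        using yknl y nq kt by (intro a_mono) auto
      then show ?thesis using akn[OF nq(3) kt(3)] at lnn by linarith
    qed
  qed
  then show ?thesis unfolding PsiA_def by (intro exI[of _ "ln (4 * y) + D"] exI[of _ 1]) auto
qed

end

theorem theorem3p18:
  fixes \<omega> :: "real \<Rightarrow> real"
  assumes "weight_function \<omega>"
    and "normalized_weight \<omega>"
    and "\<forall>x>0. \<exists>y>0. \<exists>A>0. \<forall>k::nat. k \<ge> 1 \<longrightarrow>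
           vartheta \<omega> x k \<le> A * W \<omega> y k powr (1 / real k)"
  shows "good_weight \<omega> \<longleftrightarrow> equivalent_weights \<omega> (least_concave_majorant \<omega>)"
proof -
  interpret wf \<omega> using assms(1,2) by unfold_locales
  show ?thesis
  proof
    assume "good_weight \<omega>"
    then show "equivalent_weights \<omega> (least_concave_majorant \<omega>)"
      by (intro PhiA_equiv PsiA_PhiA good_PsiA)
  next
    assume "equivalent_weights \<omega> (least_concave_majorant \<omega>)"
    then show "good_weight \<omega>"
      by (intro PsiA_good[OF _ assms(3)] PhiA_PsiA equiv_PhiA)
  qed
qed


end
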